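(* Let $U \in \mathbb{U}_N$ satisfy $|\mathrm{tr}(UU^T)| \ge N(1-\delta)$ for some $\delta\ge 0$. Then $D(U,\mathbb{O}_N) \le \sqrt{\delta}$.
   Context: $\mathbb{U}_N$ is the group of complex $N\times N$ unitary matrices, $U^T$ is the transpose, and $\mathbb{O}_N=\{U\in\mathbb{U}_N: UU^T=U^TU=I\}$ is the orthogonal group (real orthogonal matrices). $\|A\|=\sqrt{\mathrm{tr}(A^\dagger A)}$ is the Frobenius norm. For matrices $A,B$, $D(A,B)=\min_{\theta\in[0,2\pi)}\frac{1}{\sqrt{2N}}\|e^{i\theta}A-B\|$, and for a set $\mathcal{S}$, $D(A,\mathcal{S})=\inf_{B\in\mathcal{S}}D(A,B)$. *)

theory Defs
  imports "HOL-Analysis.Analysis"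
begin

text \<open>N x N complex matrices are modelled as complex^'n^'n with N = CARD('n).\<close>

definition adjoint_mat :: "complex^'n^'n \<Rightarrow> complex^'n^'n" where
  "adjoint_mat A = (\<chi> i j. cnj (A $ j $ i))"

definition unitary_group :: "(complex^'n^'n) set" where
  "unitary_group = {U. U ** adjoint_mat U = mat 1 \<and> adjoint_mat U ** U = mat 1}"

definition orthogonal_group :: "(complex^'n^'n) set" where
  "orthogonal_group = {U \<in> unitary_group. U ** transpose U = mat 1 \<and> transpose U ** U = mat 1}"

definition frob_norm :: "complex^'n^'n \<Rightarrow> real" where
  "frob_norm A = sqrt (Re (trace (adjoint_mat A ** A)))"

definition scale_mat :: "complex \<Rightarrow> complex^'n^'n \<Rightarrow> complex^'n^'n" where
  "scale_mat c A = (\<chi> i j. c * A $ i $ j)"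

definition mat_dist :: "complex^'n^'n \<Rightarrow> complex^'n^'n \<Rightarrow> real" where
  "mat_dist A B = (INF \<theta>\<in>{0..<2*pi}.
      frob_norm (scale_mat (exp (\<i> * complex_of_real \<theta>)) A - B) / sqrt (2 * real CARD('n)))"

definition mat_set_dist :: "complex^'n^'n \<Rightarrow> (complex^'n^'n) set \<Rightarrow> real" where
  "mat_set_dist A S = (INF B\<in>S. mat_dist A B)"

end

theory Submission
  imports Defs
begin


definition outer :: "real^'n \<Rightarrow> real^'n \<Rightarrow> real^'n^'n" where
  "outer u w = (\<chi> k l. u$k * w$l)"

definition hrefl :: "real^'n \<Rightarrow> real^'n^'n" where
  "hrefl u = mat 1 - (2 / (u \<bullet> u)) *\<^sub>R outer u u"

lemma mm_sub_ldistrib: "(A::real^'n^'n) ** (B - C) = A ** B - A ** C"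
  by (simp add: matrix_matrix_mult_def vec_eq_iff sum_subtractf right_diff_distrib)

lemma mm_sub_rdistrib: "((B::real^'n^'n) - C) ** A = B ** A - C ** A"
  by (simp add: matrix_matrix_mult_def vec_eq_iff sum_subtractf left_diff_distrib)

lemma mm_add_rdistrib: "((B::real^'n^'n) + C) ** A = B ** A + C ** A"
  by (simp add: matrix_matrix_mult_def vec_eq_iff sum.distrib distrib_right)

lemma mm_scale_r: "(A::real^'n^'n) ** (c *\<^sub>R B) = c *\<^sub>R (A ** B)"
  by (simp add: matrix_matrix_mult_def vec_eq_iff sum_distrib_left mult_ac)

lemma mm_scale_l: "(c *\<^sub>R (A::real^'n^'n)) ** B = c *\<^sub>R (A ** B)"
  by (simp add: matrix_matrix_mult_def vec_eq_iff sum_distrib_left mult_ac)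

lemma outer_mult: "outer u w ** outer x y = (w \<bullet> x) *\<^sub>R outer u y"
  by (simp add: outer_def matrix_matrix_mult_def vec_eq_iff inner_vec_def sum_distrib_left sum_distrib_right mult_ac)

lemma transpose_outer: "transpose (outer u w) = outer w u"
  by (simp add: outer_def transpose_def vec_eq_iff)

lemma trace_outer: "trace (outer u w ** M) = w \<bullet> (M *v u)"
proof -
  have "trace (outer u w ** M) = (\<Sum>k\<in>UNIV. \<Sum>m\<in>UNIV. u$k * w$m * M$m$k)"
    by (simp add: outer_def trace_def matrix_matrix_mult_def)
  also have "\<dots> = (\<Sum>m\<in>UNIV. \<Sum>k\<in>UNIV. w$m * (M$m$k * u$k))"
    by (subst sum.swap) (simp add: mult_ac)
  also have "\<dots> = w \<bullet> (M *v u)"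
    by (simp add: inner_vec_def matrix_vector_mult_def sum_distrib_left)
  finally show ?thesis .
qed

lemma trace_scale: "trace (c *\<^sub>R (A::real^'n^'n)) = c * trace A"
  by (simp add: trace_def sum_distrib_left)

lemma transpose_hrefl: "transpose (hrefl u) = hrefl u"
  by (simp add: hrefl_def transpose_def vec_eq_iff outer_def mat_def mult.commute)

lemma hrefl_sq: assumes "u \<noteq> 0" shows "hrefl u ** hrefl u = mat 1"
proof -
  have uu: "u \<bullet> u \<noteq> 0" using assms by simp
  show ?thesis
    unfolding hrefl_def
    by (simp add: mm_sub_ldistrib mm_sub_rdistrib mm_scale_l mm_scale_r outer_mult uu)
       (simp add: vec_eq_iff outer_def field_simps)
qed

lemma hrefl_orth: assumes "u \<noteq> 0" shows "orthogonal_matrix (hrefl u)"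
  by (simp add: orthogonal_matrix_def transpose_hrefl hrefl_sq assms)

lemma trace_hrefl: "trace (hrefl u ** M) = trace M - (2 / (u \<bullet> u)) * (u \<bullet> (M *v u))"
  by (simp add: hrefl_def mm_sub_rdistrib mm_scale_l trace_sub trace_scale trace_outer)



lemma cont_mm: "continuous_on UNIV (\<lambda>Q::real^'n^'n. transpose Q ** Q)"
  unfolding matrix_matrix_mult_def transpose_def
  by (intro continuous_intros continuous_on_vec_lambda)

lemma compact_orth: "compact {Q::real^'n^'n. orthogonal_matrix Q}"
proof (rule compact_eq_bounded_closed[THEN iffD2], rule conjI)
  show "bounded {Q::real^'n^'n. orthogonal_matrix Q}"
    unfolding bounded_iff
  proof (intro exI ballI)
    fix Q :: "real^'n^'n" assume "Q \<in> {Q. orthogonal_matrix Q}"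
    then have r: "norm (Q$i) = 1" for i
      using orthogonal_matrix_orthonormal_rows[of Q] by (auto simp: row_def)
    have "norm Q = L2_set (\<lambda>i. norm (Q$i)) UNIV" by (simp add: norm_vec_def)
    also have "\<dots> \<le> sum (\<lambda>i. norm (Q$i)) UNIV" by (rule L2_set_le_sum) auto
    finally show "norm Q \<le> real CARD('n)" using r by simp
  qed
  have "{Q::real^'n^'n. orthogonal_matrix Q} = (\<lambda>Q. transpose Q ** Q) -` {mat 1}"
    by (auto simp: orthogonal_matrix)
  then show "closed {Q::real^'n^'n. orthogonal_matrix Q}"
    using continuous_on_closed_vimage[OF closed_UNIV, THEN iffD1, OF cont_mm, rule_format, OF closed_singleton[of "mat 1"]]
    by simp
qed

lemma exists_max:
  fixes X :: "real^'n^'n"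
  shows "\<exists>Q. orthogonal_matrix Q \<and> (\<forall>R. orthogonal_matrix R \<longrightarrow> trace (transpose R ** X) \<le> trace (transpose Q ** X))"
proof -
  have c: "continuous_on {Q::real^'n^'n. orthogonal_matrix Q} (\<lambda>Q. trace (transpose Q ** X))"
    unfolding trace_def matrix_matrix_mult_def transpose_def
    by (intro continuous_intros)
  obtain Q where "Q \<in> {Q::real^'n^'n. orthogonal_matrix Q}"
    "\<forall>R\<in>{Q::real^'n^'n. orthogonal_matrix Q}. trace (transpose R ** X) \<le> trace (transpose Q ** X)"
    using continuous_attains_sup[OF compact_orth _ c] orthogonal_matrix_id by blast
  then show ?thesis by auto
qed



lemma orth_norm: assumes "orthogonal_matrix (Q::real^'n^'n)" shows "norm (Q *v x) = norm x"
proof -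
  have "orthogonal_transformation (\<lambda>x. Q *v x)"
    using assms by (simp add: orthogonal_transformation_matrix)
  then show ?thesis by (simp add: orthogonal_transformation_norm)
qed

lemma sym_inner: assumes "transpose M = (M::real^'n^'n)" shows "w \<bullet> (M *v v) = v \<bullet> (M *v w)"
proof -
  have "w \<bullet> (M *v v) = (w v* M) \<bullet> v" by (simp add: dot_lmul_matrix)
  also have "w v* M = M *v w" using assms by (metis transpose_matrix_vector)
  finally show ?thesis by (simp add: inner_commute)
qed

lemma cs_psd:
  fixes M :: "real^'n^'n"
  assumes sym: "transpose M = M" and psd: "\<And>v. 0 \<le> v \<bullet> (M *v v)"
  shows "(v \<bullet> (M *v w))^2 \<le> (v \<bullet> (M *v v)) * (w \<bullet> (M *v w))"
proof -
  define A where "A = v \<bullet> (M *v v)"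
  define B where "B = v \<bullet> (M *v w)"
  define C where "C = w \<bullet> (M *v w)"
  have q: "0 \<le> A + 2 * t * B + t^2 * C" for t
  proof -
    have "0 \<le> (v + t *\<^sub>R w) \<bullet> (M *v (v + t *\<^sub>R w))" by (rule psd)
    also have "\<dots> = A + t * (w \<bullet> (M *v v)) + t * B + t^2 * C"
      by (simp add: A_def B_def C_def algebra_simps inner_add_left inner_add_right power2_eq_square)
    also have "w \<bullet> (M *v v) = B" using sym_inner[OF sym] B_def by simp
    finally show ?thesis by (simp add: algebra_simps)
  qed
  have C0: "0 \<le> C" using psd C_def by simp
  show ?thesis
  proof (cases "C = 0")
    case True
    have "B = 0"
    proof (rule ccontr)
      assume "B \<noteq> 0"
      have "0 \<le> A + 2 * (-(A+1)/(2*B)) * B" using q[of "-(A+1)/(2*B)"] True by simp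
      also have "\<dots> = -1" using \<open>B \<noteq> 0\<close> by (simp add: field_simps)
      finally show False by simp
    qed
    then show ?thesis using True by (simp add: B_def C_def)
  next
    case False
    then have Cp: "C > 0" using C0 by simp
    have "0 \<le> A + 2 * (-B/C) * B + (-B/C)^2 * C" by (rule q)
    also have "\<dots> = A - B^2 / C" using Cp by (simp add: field_simps power2_eq_square)
    finally have "B^2 / C \<le> A" by simp
    then have "B^2 \<le> A * C" using Cp by (simp add: field_simps)
    then show ?thesis by (simp add: A_def B_def C_def)
  qed
qed

lemma psd_contr:
  fixes M :: "real^'n^'n"
  assumes sym: "transpose M = M" and psd: "\<And>v. 0 \<le> v \<bullet> (M *v v)"
    and nrm: "\<And>v. norm (M *v v) \<le> norm v"
  shows "(norm (M *v v))^2 \<le> v \<bullet> (M *v v)"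
proof -
  define y where "y = M *v v"
  have e: "v \<bullet> (M *v y) = y \<bullet> y" using sym_inner[OF sym, of v y] by (simp add: y_def)
  have "y \<bullet> (M *v y) \<le> norm y * norm (M *v y)" by (rule norm_cauchy_schwarz)
  also have "\<dots> \<le> norm y * norm y" using nrm[of y] by (simp add: mult_left_mono)
  finally have h: "y \<bullet> (M *v y) \<le> (norm y)^2" by (simp add: power2_eq_square)
  have "((norm y)^2)^2 \<le> (v \<bullet> (M *v v)) * (y \<bullet> (M *v y))"
    using cs_psd[OF sym psd, of v y] e by (simp add: power2_norm_eq_inner)
  also have "\<dots> \<le> (v \<bullet> (M *v v)) * (norm y)^2"
    using h psd[of v] by (simp add: mult_left_mono)
  finally have h2: "((norm y)^2)^2 \<le> (v \<bullet> (M *v v)) * (norm y)^2" .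
  show ?thesis
  proof (cases "y = 0")
    case True then show ?thesis using psd[of v] by (simp add: y_def)
  next
    case False
    then have p: "(norm y)^2 > 0" by simp
    have "(norm y)^2 * (norm y)^2 \<le> (v \<bullet> (M *v v)) * (norm y)^2"
      using h2 by (simp add: power2_eq_square[of "(norm y)^2"])
    then have "(norm y)^2 \<le> v \<bullet> (M *v v)" using p by (rule mult_right_le_imp_le)
    then show ?thesis by (simp add: y_def)
  qed
qed



lemma outer_mv: "outer u w *v y = (w \<bullet> y) *\<^sub>R u"
  by (simp add: outer_def matrix_vector_mult_def vec_eq_iff inner_vec_def sum_distrib_left mult_ac)

lemma axis_entry: "axis i (1::real) \<bullet> ((M::real^'n^'n) *v axis j 1) = M$i$j"
proof -
  have "(M *v axis j 1) $ i = M$i$j"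
    by (simp add: matrix_vector_mult_def axis_def if_distrib[where f="\<lambda>x. _ * x"] cong: if_cong)
  then show ?thesis by (simp add: inner_axis')
qed

lemma hrefl_mv: "hrefl u *v y = y - (2 / (u \<bullet> u) * (u \<bullet> y)) *\<^sub>R u"
  by (simp add: hrefl_def matrix_vector_mult_diff_rdistrib outer_mv)
     (simp add: matrix_vector_mult_def outer_def vec_eq_iff sum_distrib_left mult_ac inner_vec_def sum_divide_distrib)

lemma key:
  fixes X :: "real^'n^'n"
  assumes nX: "\<And>u. norm (X *v u) \<le> norm u"
  shows "\<exists>Q. orthogonal_matrix Q \<and> (\<Sum>k\<in>UNIV. (norm (X *v axis k 1))^2) \<le> trace (transpose Q ** X)"
proof -
  obtain Q where Q: "orthogonal_matrix Q"
    and mx: "\<And>R. orthogonal_matrix R \<Longrightarrow> trace (transpose R ** X) \<le> trace (transpose Q ** X)"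
    using exists_max[of X] by blast
  define M where "M = transpose Q ** X"
  have max: "trace (transpose R ** M) \<le> trace M" if "orthogonal_matrix R" for R
  proof -
    have "orthogonal_matrix (Q ** R)" using Q that by (rule orthogonal_matrix_mul)
    from mx[OF this] show ?thesis
      by (simp add: M_def matrix_transpose_mul matrix_mul_assoc)
  qed
  have psd: "0 \<le> v \<bullet> (M *v v)" for v
  proof (cases "v = 0")
    case False
    have "trace (transpose (hrefl v) ** M) \<le> trace M" using max hrefl_orth[OF False] by blast
    then have "0 \<le> (2 / (v \<bullet> v)) * (v \<bullet> (M *v v))"
      by (simp add: transpose_hrefl trace_hrefl)
    moreover have "v \<bullet> v > 0" using False by simp
    ultimately show ?thesis by (simp add: zero_le_mult_iff zero_le_divide_iff)
  qed simp
  have le: "M$i$j \<le> M$j$i" if "i \<noteq> j" for i j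
  proof (rule ccontr)
    assume "\<not> M$i$j \<le> M$j$i"
    then have bpos: "M$i$j - M$j$i > 0" by simp
    define a where "a = \<bar>M$i$i + M$j$j\<bar>"
    define t where "t = (M$i$j - M$j$i) / (a + 1)"
    have a0: "a \<ge> 0" by (simp add: a_def)
    have tpos: "t > 0" using bpos a0 by (simp add: t_def)
    define u where "u = axis i (1::real)"
    define w where "w = axis i (1::real) + t *\<^sub>R axis j 1"
    have u0: "u \<noteq> 0" by (simp add: u_def)
    have w0: "w \<noteq> 0" using that by (simp add: w_def vec_eq_iff axis_def) (metis)
    have uu: "u \<bullet> u = 1" by (simp add: u_def inner_axis_axis)
    have ww: "w \<bullet> w = 1 + t^2" using that
      by (simp add: w_def inner_add_left inner_add_right inner_axis_axis power2_eq_square)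
    have wu: "w \<bullet> u = 1" using that
      by (simp add: w_def u_def inner_add_left inner_axis_axis)
    have uMu: "u \<bullet> (M *v u) = M$i$i" by (simp add: u_def axis_entry)
    have uMw: "u \<bullet> (M *v w) = M$i$i + t * M$i$j"
      by (simp add: u_def w_def matrix_vector_right_distrib matrix_vector_mult_scaleR inner_add_right axis_entry)
    have wMw: "w \<bullet> (M *v w) = M$i$i + t * M$i$j + t * M$j$i + t^2 * M$j$j"
      by (simp add: w_def matrix_vector_right_distrib matrix_vector_mult_scaleR inner_add_right
          inner_add_left axis_entry algebra_simps power2_eq_square)
    have D0: "1 + t^2 \<noteq> 0"
      by (metis add_pos_nonneg zero_less_one zero_le_power2 less_irrefl)
    have oR: "orthogonal_matrix (hrefl u ** hrefl w)"
      by (rule orthogonal_matrix_mul) (simp_all add: hrefl_orth u0 w0)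
    have "trace (transpose (hrefl u ** hrefl w) ** M) = trace (hrefl w ** (hrefl u ** M))"
      by (simp add: matrix_transpose_mul transpose_hrefl matrix_mul_assoc)
    also have "\<dots> = trace M - 2 * M$i$i - (2 / (1 + t^2)) * ((w \<bullet> (M *v w)) - 2 * (u \<bullet> (M *v w)))"
      by (simp add: trace_hrefl ww uu uMu wu hrefl_mv inner_diff_right matrix_vector_mul_assoc[symmetric]
          algebra_simps)
    finally have "trace M - 2 * M$i$i - (2 / (1 + t^2)) * ((w \<bullet> (M *v w)) - 2 * (u \<bullet> (M *v w))) \<le> trace M"
      using max[OF oR] by simp
    then have "0 \<le> 2 * M$i$i + (2 / (1 + t^2)) * ((w \<bullet> (M *v w)) - 2 * (u \<bullet> (M *v w)))" by simp
    then have "0 \<le> (1 + t^2) / 2 * (2 * M$i$i + (2 / (1 + t^2)) * ((w \<bullet> (M *v w)) - 2 * (u \<bullet> (M *v w))))"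
      by (intro mult_nonneg_nonneg) (auto simp: add_nonneg_nonneg)
    also have "\<dots> = (1 + t^2) * M$i$i + ((w \<bullet> (M *v w)) - 2 * (u \<bullet> (M *v w)))"
      using D0 by (simp add: field_simps)
    finally have "0 \<le> (1 + t^2) * M$i$i + ((w \<bullet> (M *v w)) - 2 * (u \<bullet> (M *v w)))" .
    then have "0 \<le> t^2 * (M$i$i + M$j$j) - t * (M$i$j - M$j$i)"
      unfolding uMw wMw by (simp add: algebra_simps power2_eq_square)
    then have "t * (M$i$j - M$j$i) \<le> t * (t * (M$i$i + M$j$j))"
      by (simp add: algebra_simps power2_eq_square)
    then have "M$i$j - M$j$i \<le> t * (M$i$i + M$j$j)" using tpos by simp
    also have "\<dots> \<le> t * a" using tpos by (simp add: a_def)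
    also have "\<dots> < M$i$j - M$j$i" using bpos a0 by (simp add: t_def field_simps)
    finally show False by simp
  qed
  have sym: "transpose M = M"
    by (simp add: vec_eq_iff transpose_def) (metis le order_antisym)
  have nrm: "norm (M *v v) \<le> norm v" for v
  proof -
    have "norm (M *v v) = norm (transpose Q *v (X *v v))" by (simp add: M_def matrix_vector_mul_assoc)
    also have "\<dots> = norm (X *v v)" using Q orth_norm[of "transpose Q" "X *v v"] by simp
    finally show ?thesis using nX by simp
  qed
  have "(\<Sum>k\<in>UNIV. (norm (X *v axis k 1))^2) = (\<Sum>k\<in>UNIV. (norm (M *v axis k 1))^2)"
    using Q orth_norm[of "transpose Q"] by (simp add: M_def matrix_vector_mul_assoc[symmetric])
  also have "\<dots> \<le> (\<Sum>k\<in>UNIV. axis k 1 \<bullet> (M *v axis k 1))"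
    by (rule sum_mono) (rule psd_contr[OF sym psd nrm])
  also have "\<dots> = trace M" by (simp add: axis_entry trace_def)
  finally show ?thesis using Q by (auto simp: M_def)
qed



definition cm :: "real^'n^'n \<Rightarrow> complex^'n^'n" where
  "cm A = (\<chi> i j. complex_of_real (A$i$j))"

lemma cm_mult: "cm A ** cm B = cm (A ** B)"
  by (simp add: cm_def matrix_matrix_mult_def vec_eq_iff)

lemma cm_adj: "adjoint_mat (cm A) = cm (transpose A)"
  by (simp add: cm_def adjoint_mat_def transpose_def vec_eq_iff)

lemma cm_transpose: "transpose (cm A) = cm (transpose A)"
  by (simp add: cm_def transpose_def vec_eq_iff)

lemma cm_mat1: "cm (mat 1 :: real^'n^'n) = mat 1"
  by (simp add: cm_def mat_def vec_eq_iff)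

lemma cm_orth: assumes "orthogonal_matrix Q" shows "cm Q \<in> orthogonal_group"
  using assms
  by (simp add: orthogonal_group_def unitary_group_def cm_adj cm_transpose cm_mult cm_mat1
      orthogonal_matrix_def)

lemma choose_theta: "\<exists>\<theta>\<in>{0..<2*pi}. (exp (\<i> * complex_of_real \<theta>))^2 * z = complex_of_real (cmod z)"
proof -
  define \<theta>0 where "\<theta>0 = - Arg z / 2"
  define \<theta> where "\<theta> = (if \<theta>0 < 0 then \<theta>0 + pi else \<theta>0)"
  have b: "- pi < Arg z" "Arg z \<le> pi" using Arg_bounded by auto
  have r: "\<theta> \<in> {0..<2*pi}" using b by (auto simp: \<theta>_def \<theta>0_def)
  have e: "2 * \<theta> + Arg z = 0 \<or> 2 * \<theta> + Arg z = 2 * pi" by (auto simp: \<theta>_def \<theta>0_def)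
  have "(exp (\<i> * complex_of_real \<theta>))^2 * z = cis \<theta> ^ 2 * rcis (cmod z) (Arg z)"
    by (simp add: cis_conv_exp rcis_cmod_Arg)
  also have "\<dots> = complex_of_real (cmod z) * cis (2 * \<theta> + Arg z)"
  proof -
    have "cis \<theta> ^ 2 = cis (2 * \<theta>)" by (simp add: power2_eq_square cis_mult)
    then show ?thesis by (simp add: rcis_def cis_mult[symmetric] mult_ac)
  qed
  also have "\<dots> = complex_of_real (cmod z)" using e by auto
  finally show ?thesis using r by blast
qed



lemma swap3: "(\<Sum>i\<in>(UNIV::'a::finite set). \<Sum>j\<in>(UNIV::'b::finite set). \<Sum>k\<in>(UNIV::'c::finite set). f i j k)
   = (\<Sum>j\<in>UNIV. \<Sum>k\<in>UNIV. \<Sum>i\<in>UNIV. f i j k)"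
proof -
  have "(\<Sum>i\<in>(UNIV::'a set). \<Sum>j\<in>(UNIV::'b set). \<Sum>k\<in>(UNIV::'c set). f i j k)
      = (\<Sum>j\<in>UNIV. \<Sum>i\<in>UNIV. \<Sum>k\<in>UNIV. f i j k)" by (rule sum.swap)
  also have "\<dots> = (\<Sum>j\<in>UNIV. \<Sum>k\<in>UNIV. \<Sum>i\<in>UNIV. f i j k)"
    by (rule sum.cong[OF refl], rule sum.swap)
  finally show ?thesis .
qed

lemma mv_axis: "((M::real^'n^'n) *v axis j 1)$i = M$i$j"
  by (simp add: matrix_vector_mult_def axis_def if_distrib[where f="\<lambda>x. _ * x"] cong: if_cong)

lemma norm_bound:
  fixes X Y :: "real^'n^'n"
  assumes G: "\<And>j k. (\<Sum>i\<in>UNIV. X$i$j * X$i$k + Y$i$j * Y$i$k) = (if j = k then 1 else 0)"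
  shows "norm (X *v u) \<le> norm u"
proof -
  have "(norm (X *v u))^2 + (norm (Y *v u))^2
      = (\<Sum>i\<in>UNIV. (\<Sum>j\<in>UNIV. X$i$j*u$j) * (\<Sum>k\<in>UNIV. X$i$k*u$k) + (\<Sum>j\<in>UNIV. Y$i$j*u$j) * (\<Sum>k\<in>UNIV. Y$i$k*u$k))"
    by (simp add: power2_norm_eq_inner inner_vec_def matrix_vector_mult_def sum.distrib)
  also have "\<dots> = (\<Sum>i\<in>UNIV. \<Sum>j\<in>UNIV. \<Sum>k\<in>UNIV. (X$i$j * X$i$k + Y$i$j * Y$i$k) * (u$j * u$k))"
    by (simp add: sum_product sum.distrib[symmetric] algebra_simps)
  also have "\<dots> = (\<Sum>j\<in>UNIV. \<Sum>k\<in>UNIV. \<Sum>i\<in>UNIV. (X$i$j * X$i$k + Y$i$j * Y$i$k) * (u$j * u$k))"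
    by (rule swap3)
  also have "\<dots> = (\<Sum>j\<in>UNIV. \<Sum>k\<in>UNIV. (if j = k then 1 else 0) * (u$j * u$k))"
    by (simp add: sum_distrib_right[symmetric] G)
  also have "\<dots> = (norm u)^2"
    by (simp add: power2_norm_eq_inner inner_vec_def if_distrib[where f="\<lambda>x. x * _"] cong: if_cong)
  finally have "(norm (X *v u))^2 \<le> (norm u)^2"
    by (metis le_add_same_cancel1 zero_le_power2)
  then show ?thesis by (simp add: power2_le_iff_abs_le)
qed



lemma Re_cnj_mult: "Re (cnj a * b) = Re a * Re b + Im a * Im b"
  by simp

lemma trace_adj_nonneg: "0 \<le> Re (trace (adjoint_mat (A::complex^'n^'n) ** A))"
  by (simp add: trace_def matrix_matrix_mult_def adjoint_mat_def Re_sum sum_nonneg)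

lemma frob_nonneg: "0 \<le> frob_norm A"
  by (simp add: frob_norm_def trace_adj_nonneg)

theorem lemma2:
  fixes U :: "complex^'n^'n" and \<delta> :: real
  assumes "U \<in> unitary_group"
    and "\<delta> \<ge> 0"
    and "cmod (trace (U ** transpose U)) \<ge> real CARD('n) * (1 - \<delta>)"
  shows "mat_set_dist U orthogonal_group \<le> sqrt \<delta>"
proof -
  define N where "N = real CARD('n)"
  have Npos: "N > 0" by (simp add: N_def)
  define t where "t = trace (U ** transpose U)"
  obtain \<theta> where th: "\<theta> \<in> {0..<2*pi}" and tc: "(exp (\<i> * complex_of_real \<theta>))^2 * t = complex_of_real (cmod t)"
    using choose_theta by blast
  define c where "c = exp (\<i> * complex_of_real \<theta>)"
  have c1: "cnj c * c = 1"
    by (simp add: c_def cis_conv_exp[symmetric] cis_cnj cis_mult)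
  define X :: "real^'n^'n" where "X = (\<chi> i j. Re (c * U$i$j))"
  define Y :: "real^'n^'n" where "Y = (\<chi> i j. Im (c * U$i$j))"
  have uni: "(\<Sum>i\<in>UNIV. cnj (U$i$j) * U$i$k) = (if j = k then 1 else 0)" for j k
  proof -
    have "adjoint_mat U ** U = mat 1" using assms(1) by (simp add: unitary_group_def)
    then have "(adjoint_mat U ** U)$j$k = (mat 1 :: complex^'n^'n)$j$k" by simp
    then show ?thesis by (simp add: matrix_matrix_mult_def adjoint_mat_def mat_def)
  qed
  have G: "(\<Sum>i\<in>UNIV. X$i$j * X$i$k + Y$i$j * Y$i$k) = (if j = k then 1 else 0)" for j k
  proof -
    have "(\<Sum>i\<in>UNIV. X$i$j * X$i$k + Y$i$j * Y$i$k) = Re (\<Sum>i\<in>UNIV. cnj (c * U$i$j) * (c * U$i$k))"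
      unfolding Re_sum by (rule sum.cong) (simp_all add: X_def Y_def algebra_simps)
    also have "(\<Sum>i\<in>UNIV. cnj (c * U$i$j) * (c * U$i$k)) = (\<Sum>i\<in>UNIV. (cnj c * c) * (cnj (U$i$j) * U$i$k))"
      by (simp add: mult_ac)
    also have "\<dots> = (if j = k then 1 else 0)" by (simp add: c1 uni)
    finally show ?thesis by simp
  qed
  obtain Q where Q: "orthogonal_matrix Q"
    and kQ: "(\<Sum>k\<in>UNIV. (norm (X *v axis k 1))^2) \<le> trace (transpose Q ** X)"
    using key[of X] norm_bound[OF G] by blast
  define SX where "SX = (\<Sum>j\<in>UNIV. \<Sum>i\<in>UNIV. (X$i$j)^2)"
  define T where "T = (\<Sum>j\<in>UNIV. \<Sum>i\<in>UNIV. Q$i$j * X$i$j)"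
  have SXT: "SX \<le> T"
  proof -
    have "(\<Sum>k\<in>UNIV. (norm (X *v axis k 1))^2) = SX"
    proof -
      have "(norm (X *v axis k 1))^2 = (\<Sum>i\<in>UNIV. (X$i$k)^2)" for k
        unfolding power2_norm_eq_inner inner_vec_def by (simp add: mv_axis power2_eq_square)
      then show ?thesis by (simp add: SX_def)
    qed
    moreover have "trace (transpose Q ** X) = T"
      by (simp add: T_def trace_def matrix_matrix_mult_def transpose_def)
    ultimately show ?thesis using kQ by simp
  qed
  have sXY: "(\<Sum>j\<in>UNIV. \<Sum>i\<in>UNIV. (X$i$j)^2 + (Y$i$j)^2) = N"
    using G by (simp add: N_def power2_eq_square)
  have sQ: "(\<Sum>j\<in>UNIV. \<Sum>i\<in>UNIV. (Q$i$j)^2) = N"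
  proof -
    have "(transpose Q ** Q)$j$j = 1" for j using Q by (simp add: orthogonal_matrix_def mat_def)
    then have "(\<Sum>i\<in>UNIV. (Q$i$j)^2) = 1" for j
      by (simp add: matrix_matrix_mult_def transpose_def power2_eq_square)
    then show ?thesis by (simp add: N_def)
  qed
  have ct: "cmod t = 2 * SX - N"
  proof -
    have t_eq: "t = (\<Sum>i\<in>UNIV. \<Sum>k\<in>UNIV. U$i$k * U$i$k)"
      by (simp add: t_def trace_def matrix_matrix_mult_def transpose_def)
    have "c^2 * t = (\<Sum>i\<in>UNIV. \<Sum>k\<in>UNIV. c^2 * (U$i$k * U$i$k))"
      by (simp add: t_eq sum_distrib_left)
    also have "\<dots> = (\<Sum>i\<in>UNIV. \<Sum>k\<in>UNIV. (c * U$i$k) * (c * U$i$k))"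
      by (simp add: power2_eq_square mult_ac)
    finally have e: "complex_of_real (cmod t) = (\<Sum>i\<in>UNIV. \<Sum>k\<in>UNIV. (c * U$i$k) * (c * U$i$k))"
      using tc unfolding c_def by simp
    have "cmod t = Re (complex_of_real (cmod t))" by simp
    also have "\<dots> = (\<Sum>i\<in>UNIV. \<Sum>k\<in>UNIV. Re ((c * U$i$k) * (c * U$i$k)))"
      unfolding e by (simp add: Re_sum)
    also have "\<dots> = (\<Sum>i\<in>UNIV. \<Sum>k\<in>UNIV. 2 * (X$i$k)^2 - ((X$i$k)^2 + (Y$i$k)^2))"
    proof -
      have r: "Re (z * z) = 2 * (Re z)^2 - ((Re z)^2 + (Im z)^2)" for z :: complex
        by (simp add: power2_eq_square)
      show ?thesis by (simp only: r X_def Y_def vec_lambda_beta)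
    qed
    also have "\<dots> = (\<Sum>k\<in>UNIV. \<Sum>i\<in>UNIV. 2 * (X$i$k)^2 - ((X$i$k)^2 + (Y$i$k)^2))"
      by (rule sum.swap)
    also have "\<dots> = 2 * SX - N"
      by (simp only: SX_def sXY[symmetric] sum_subtractf sum_distrib_left[symmetric])
    finally show ?thesis .
  qed
  define A where "A = scale_mat c U - cm Q"
  define F where "F = Re (trace (adjoint_mat A ** A))"
  have FF: "F = 2 * N - 2 * T"
  proof -
    have "F = (\<Sum>j\<in>UNIV. \<Sum>i\<in>UNIV. Re (cnj (A$i$j) * A$i$j))"
      by (simp add: F_def trace_def matrix_matrix_mult_def adjoint_mat_def Re_sum)
    also have "\<dots> = (\<Sum>j\<in>UNIV. \<Sum>i\<in>UNIV. ((X$i$j)^2 + (Y$i$j)^2) + (Q$i$j)^2 - 2 * (Q$i$j * X$i$j))"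
    proof -
      have r: "Re (cnj z * z) = (Re z)^2 + (Im z)^2" for z :: complex
        by (simp add: power2_eq_square)
      have a: "Re (A$i$j) = X$i$j - Q$i$j" "Im (A$i$j) = Y$i$j" for i j
        by (simp_all add: A_def scale_mat_def cm_def X_def Y_def)
      show ?thesis by (simp only: r a) (simp add: power2_eq_square algebra_simps)
    qed
    also have "\<dots> = 2 * N - 2 * T"
    proof -
      have "(\<Sum>j\<in>UNIV. \<Sum>i\<in>UNIV. ((X$i$j)^2 + (Y$i$j)^2) + (Q$i$j)^2 - 2 * (Q$i$j * X$i$j))
        = (\<Sum>j\<in>UNIV. \<Sum>i\<in>UNIV. (X$i$j)^2 + (Y$i$j)^2) + (\<Sum>j\<in>UNIV. \<Sum>i\<in>UNIV. (Q$i$j)^2)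
          - 2 * (\<Sum>j\<in>UNIV. \<Sum>i\<in>UNIV. Q$i$j * X$i$j)"
        by (simp add: sum.distrib sum_subtractf sum_distrib_left)
      then show ?thesis by (simp add: sXY sQ T_def)
    qed
    finally show ?thesis .
  qed
  have Fle: "F \<le> N * \<delta>"
    using FF SXT ct assms(3) unfolding t_def[symmetric] N_def[symmetric] by (simp add: algebra_simps)
  have F0: "0 \<le> F" unfolding F_def
    by (rule trace_adj_nonneg)
  have nonneg: "0 \<le> mat_dist U B" for B :: "complex^'n^'n"
    unfolding mat_dist_def
    by (rule cINF_greatest) (auto simp: frob_nonneg pi_gt_zero)
  have "mat_set_dist U orthogonal_group \<le> mat_dist U (cm Q)"
    unfolding mat_set_dist_def
    by (rule cINF_lower) (auto intro!: bdd_belowI[where m=0] nonneg cm_orth Q)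
  also have "\<dots> \<le> frob_norm (scale_mat c U - cm Q) / sqrt (2 * N)"
    unfolding mat_dist_def N_def c_def
    by (rule cINF_lower[OF _ th]) (auto intro!: bdd_belowI[where m=0] simp: frob_nonneg)
  also have "\<dots> = sqrt (F / (2 * N))"
    by (simp add: frob_norm_def F_def A_def real_sqrt_divide)
  also have "\<dots> \<le> sqrt \<delta>"
  proof (rule real_sqrt_le_mono)
    have "0 \<le> N * \<delta>" using Npos assms(2) by simp
    then have "F \<le> \<delta> * (2 * N)" using Fle by (simp add: algebra_simps)
    then show "F / (2 * N) \<le> \<delta>" using Npos by (simp add: pos_divide_le_eq)
  qed
  finally show ?thesis .
qed

end
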